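(* Let $N\in\mathbb{N}$, let $\omega_0$ be a centered one-dimensional Gaussian distribution, and let $h$ be the smallest integer with $N\le2^h$. Consider a complete binary tree of depth $h$ (with $2^h$ leaves, ordered left to right), and attach random variables $\alpha_v$ to its nodes as follows: the root's variable is distributed as a sum of $2^h$ independent $\omega_0$-variables; proceeding layer by layer, if $w$ has children $u$ (left) and $v$ (right) and $\alpha_w$ has been sampled with value $a$, where $\alpha_w$ is distributed as a sum of $2^l$ independent $\omega_0$-variables, then $(\alpha_u,\alpha_v)$ is sampled (using fresh independent randomness) from the conditional distribution of $(Y_1,Y_2)$ given $Y_1+Y_2=a$, where $Y_1,Y_2$ are independent and each is a sum of $2^{l-1}$ independent $\omega_0$-variables (so $\alpha_v=a-\alpha_u$). For $x\in\{0,1,\dots,N\}$ let $\alpha^x$ be the sum of the variables attached to the first $x$ leaves. Let $\omega\in\mathbb{R}^N$ have i.i.d. coordinates with distribution $\omega_0$, and let $\pi_1(x)\in\mathbb{R}^N$ be the vector whose first $x$ entries equal $1$ and whose remaining entries equal $0$. Then the joint distribution of $(\alpha^x)_{x=0,1,\dots,N}$ equals the joint distribution of $(\langle\omega,\pi_1(x)\rangle)_{x=0,1,\dots,N}$.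
   Context: All sampling is assumed exact (no simulation bias). *)

theory Defs
  imports "HOL-Probability.Probability"
begin

definition gauss :: "real \<Rightarrow> real measure" where
  "gauss \<sigma> = density lborel (normal_density 0 \<sigma>)"

definition sumlaw :: "real \<Rightarrow> nat \<Rightarrow> real measure" where
  "sumlaw \<sigma> n = distr (PiM {..<n} (\<lambda>_. gauss \<sigma>)) borel (\<lambda>x. \<Sum>i<n. x i)"

text \<open>kappa is a (regular) conditional distribution of (Y1,Y2) given Y1+Y2, where
  Y1, Y2 are independent, each a sum of 2^(l-1) independent omega_0-variables:
  kappa is a probability kernel and law(Y1+Y2,(Y1,Y2)) = law(Y1+Y2) bind kappa.\<close>
definition is_cond_kernel :: "real \<Rightarrow> nat \<Rightarrow> (real \<Rightarrow> (real \<times> real) measure) \<Rightarrow> bool" where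
  "is_cond_kernel \<sigma> l \<kappa> \<longleftrightarrow>
     \<kappa> \<in> borel \<rightarrow>\<^sub>M subprob_algebra (borel \<Otimes>\<^sub>M borel) \<and>
     (\<forall>a. prob_space (\<kappa> a)) \<and>
     distr (sumlaw \<sigma> (2^(l-1)) \<Otimes>\<^sub>M sumlaw \<sigma> (2^(l-1))) (borel \<Otimes>\<^sub>M (borel \<Otimes>\<^sub>M borel))
        (\<lambda>(y1, y2). (y1 + y2, (y1, y2)))
     = sumlaw \<sigma> (2^l) \<bind> (\<lambda>a. distr (\<kappa> a) (borel \<Otimes>\<^sub>M (borel \<Otimes>\<^sub>M borel)) (\<lambda>p. (a, p)))"

definition tree_height :: "nat \<Rightarrow> nat" where
  "tree_height N = (LEAST h. N \<le> 2 ^ h)"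

text \<open>Joint law of the variables at depth d of the tree of depth h (nodes indexed
  0..2^d-1 left to right; children of node i are 2i (left) and 2i+1 (right)).
  A node at depth d carries a sum of 2^(h-d) omega_0-variables, so its children are
  sampled (independently over the nodes of the layer) from kappa (h-d).\<close>
primrec tree_layer :: "real \<Rightarrow> (nat \<Rightarrow> real \<Rightarrow> (real \<times> real) measure) \<Rightarrow> nat \<Rightarrow> nat
    \<Rightarrow> (nat \<Rightarrow> real) measure" where
  "tree_layer \<sigma> \<kappa> h 0 =
     distr (sumlaw \<sigma> (2^h)) (PiM {..<1} (\<lambda>_. borel)) (\<lambda>a. \<lambda>i\<in>{..<1}. a)"
| "tree_layer \<sigma> \<kappa> h (Suc d) =
     tree_layer \<sigma> \<kappa> h d \<bind> (\<lambda>\<alpha>.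
       distr (PiM {..<2^d} (\<lambda>i. \<kappa> (h - d) (\<alpha> i))) (PiM {..<2^Suc d} (\<lambda>_. borel))
         (\<lambda>p. \<lambda>j\<in>{..<2^Suc d}. if even j then fst (p (j div 2)) else snd (p (j div 2))))"

end

theory Submission
  imports Defs
begin


lemma measurable_PiM_kernel:
  fixes I :: "'i set" and N :: "'b measure"
  assumes I: "finite I"
    and K: "K \<in> M \<rightarrow>\<^sub>M subprob_algebra N"
    and P: "\<And>a. prob_space (K a)"
  shows "(\<lambda>\<alpha>. PiM I (\<lambda>i. K (\<alpha> i))) \<in> PiM I (\<lambda>_. M) \<rightarrow>\<^sub>M subprob_algebra (PiM I (\<lambda>_. N))"
proof (rule measurable_subprob_algebra_generated[OF sets_PiM_finite])
  let ?G = "{(\<Pi>\<^sub>E i\<in>I. X i) |X. (\<forall>i. X i \<in> sets N) \<and> finite {i. X i \<noteq> space N}}"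
  show "Int_stable ?G"
  proof (rule Int_stableI, clarify)
    fix X Y :: "'i \<Rightarrow> 'b set" assume X: "\<forall>i. X i \<in> sets N" "finite {i. X i \<noteq> space N}"
      and Y: "\<forall>i. Y i \<in> sets N" "finite {i. Y i \<noteq> space N}"
    have "(\<Pi>\<^sub>E i\<in>I. X i) \<inter> (\<Pi>\<^sub>E i\<in>I. Y i) = (\<Pi>\<^sub>E i\<in>I. X i \<inter> Y i)" by auto
    moreover have "finite {i. X i \<inter> Y i \<noteq> space N}"
      by (rule finite_subset[OF _ finite_UnI[OF X(2) Y(2)]]) auto
    ultimately show "\<exists>Z. (\<Pi>\<^sub>E i\<in>I. X i) \<inter> (\<Pi>\<^sub>E i\<in>I. Y i) = (\<Pi>\<^sub>E i\<in>I. Z i) \<and>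
        (\<forall>i. Z i \<in> sets N) \<and> finite {i. Z i \<noteq> space N}"
      using X Y by (intro exI[of _ "\<lambda>i. X i \<inter> Y i"]) auto
  qed
  show "?G \<subseteq> Pow (\<Pi>\<^sub>E i\<in>I. space N)"
    using sets.sets_into_space by fastforce
  fix a assume a: "a \<in> space (PiM I (\<lambda>_. M))"
  show "subprob_space (PiM I (\<lambda>i. K (a i)))"
    by (simp add: P prob_space_PiM prob_space_imp_subprob_space)
  show "sets (PiM I (\<lambda>i. K (a i))) = sets (PiM I (\<lambda>_. N))"
    by (intro sets_PiM_cong refl sets_kernel[OF K]) (use a in \<open>auto simp: space_PiM\<close>)
next
  have *: "emeasure (PiM I (\<lambda>i. K (a i))) (\<Pi>\<^sub>E i\<in>I. X i) = (\<Prod>i\<in>I. emeasure (K (a i)) (X i))"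
    if a: "a \<in> space (PiM I (\<lambda>_. M))" and X: "\<forall>i. X i \<in> sets N" for a and X :: "'i \<Rightarrow> 'b set"
  proof -
    interpret product_sigma_finite "\<lambda>i. K (a i)"
      by (simp add: product_sigma_finite_def P prob_space_imp_sigma_finite)
    have ai: "\<And>i. i \<in> I \<Longrightarrow> a i \<in> space M" using a by (auto simp: space_PiM)
    show ?thesis using X I by (intro emeasure_PiM) (simp_all add: sets_kernel[OF K ai])
  qed
  fix A assume "A \<in> {(\<Pi>\<^sub>E i\<in>I. X i) |X. (\<forall>i. X i \<in> sets N) \<and> finite {i. X i \<noteq> space N}}"
  then obtain X where A: "A = (\<Pi>\<^sub>E i\<in>I. X i)" and X: "\<forall>i. X i \<in> sets N" by auto
  have "(\<lambda>a. \<Prod>i\<in>I. emeasure (K (a i)) (X i)) \<in> borel_measurable (PiM I (\<lambda>_. M))"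
    using X K by (intro borel_measurable_prod_ennreal measurable_compose[OF measurable_component_singleton]
        measurable_emeasure_kernel) auto
  then show "(\<lambda>a. emeasure (PiM I (\<lambda>i. K (a i))) A) \<in> borel_measurable (PiM I (\<lambda>_. M))"
    by (rule measurable_cong[THEN iffD1, rotated]) (use * X in \<open>auto simp: A\<close>)
next
  show "(\<lambda>a. emeasure (PiM I (\<lambda>i. K (a i))) (\<Pi>\<^sub>E i\<in>I. space N)) \<in> borel_measurable (PiM I (\<lambda>_. M))"
  proof -
  have *: "emeasure (PiM I (\<lambda>i. K (a i))) (\<Pi>\<^sub>E i\<in>I. X i) = (\<Prod>i\<in>I. emeasure (K (a i)) (X i))"
    if a: "a \<in> space (PiM I (\<lambda>_. M))" and X: "\<forall>i. X i \<in> sets N" for a and X :: "'i \<Rightarrow> 'b set"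
  proof -
    interpret product_sigma_finite "\<lambda>i. K (a i)"
      by (simp add: product_sigma_finite_def P prob_space_imp_sigma_finite)
    have ai: "\<And>i. i \<in> I \<Longrightarrow> a i \<in> space M" using a by (auto simp: space_PiM)
    show ?thesis using X I by (intro emeasure_PiM) (simp_all add: sets_kernel[OF K ai])
  qed
    have "(\<lambda>a. \<Prod>i\<in>I. emeasure (K (a i)) (space N)) \<in> borel_measurable (PiM I (\<lambda>_. M))"
      using K by (intro borel_measurable_prod_ennreal measurable_compose[OF measurable_component_singleton]
          measurable_emeasure_kernel) auto
    then show ?thesis
      by (rule measurable_cong[THEN iffD1, rotated]) (use *[of _ "\<lambda>_. space N"] in \<open>auto\<close>)
  qed
qed

lemma bind_PiM_kernel:
  fixes I :: "'i set" and N :: "'b measure"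
  assumes I: "finite I" and M: "prob_space M"
    and K: "K \<in> M \<rightarrow>\<^sub>M subprob_algebra N"
    and P: "\<And>a. prob_space (K a)"
  shows "PiM I (\<lambda>_. M) \<bind> (\<lambda>\<alpha>. PiM I (\<lambda>i. K (\<alpha> i))) = PiM I (\<lambda>_. M \<bind> K)"
proof -
  have MK: "prob_space (M \<bind> K)"
    using M K P by (intro prob_space.prob_space_bind[where S=N]) (auto simp: prob_space.not_empty)
  have sMK: "sets (M \<bind> K) = sets N"
    using M K by (intro sets_bind[OF sets_kernel[OF K]]) (auto simp: prob_space.not_empty)
  interpret PK: product_sigma_finite "\<lambda>_. M \<bind> K"
    by (simp add: product_sigma_finite_def MK prob_space_imp_sigma_finite)
  interpret PM: product_sigma_finite "\<lambda>_. M"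
    by (simp add: product_sigma_finite_def M prob_space_imp_sigma_finite)
  have F: "(\<lambda>\<alpha>. PiM I (\<lambda>i. K (\<alpha> i))) \<in> PiM I (\<lambda>_. M) \<rightarrow>\<^sub>M subprob_algebra (PiM I (\<lambda>_. N))"
    by (rule measurable_PiM_kernel[OF I K P])
  have ne: "space (PiM I (\<lambda>_. M)) \<noteq> {}"
    using prob_space.not_empty[OF prob_space_PiM[OF M]] .
  show ?thesis
  proof (rule PK.PiM_eqI[OF I])
    show "sets (PiM I (\<lambda>_. M) \<bind> (\<lambda>\<alpha>. PiM I (\<lambda>i. K (\<alpha> i)))) = sets (PiM I (\<lambda>_. M \<bind> K))"
      using sets_kernel[OF F] ne by (subst sets_bind) (auto intro!: sets_PiM_cong simp: sMK)
  next
    fix A assume A: "\<And>i. i \<in> I \<Longrightarrow> A i \<in> sets (M \<bind> K)"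
    have *: "emeasure (PiM I (\<lambda>i. K (a i))) (\<Pi>\<^sub>E i\<in>I. A i) = (\<Prod>i\<in>I. emeasure (K (a i)) (A i))"
      if a: "a \<in> space (PiM I (\<lambda>_. M))" for a
    proof -
      interpret product_sigma_finite "\<lambda>i. K (a i)"
        by (simp add: product_sigma_finite_def P prob_space_imp_sigma_finite)
      have ai: "\<And>i. i \<in> I \<Longrightarrow> a i \<in> space M" using a by (auto simp: space_PiM)
      show ?thesis using A I by (intro emeasure_PiM) (simp_all add: sets_kernel[OF K ai] sMK)
    qed
    have "emeasure (PiM I (\<lambda>_. M) \<bind> (\<lambda>\<alpha>. PiM I (\<lambda>i. K (\<alpha> i)))) (\<Pi>\<^sub>E i\<in>I. A i)
        = (\<integral>\<^sup>+a. emeasure (PiM I (\<lambda>i. K (a i))) (\<Pi>\<^sub>E i\<in>I. A i) \<partial>PiM I (\<lambda>_. M))"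
      using A I sMK by (intro emeasure_bind[OF ne F]) (auto intro!: sets_PiM_I_finite)
    also have "\<dots> = (\<integral>\<^sup>+a. (\<Prod>i\<in>I. emeasure (K (a i)) (A i)) \<partial>PiM I (\<lambda>_. M))"
      by (intro nn_integral_cong *)
    also have "\<dots> = (\<Prod>i\<in>I. \<integral>\<^sup>+a. emeasure (K a) (A i) \<partial>M)"
      using A sMK by (intro PM.product_nn_integral_prod[OF I] measurable_emeasure_kernel[OF K]) auto
    also have "\<dots> = (\<Prod>i\<in>I. emeasure (M \<bind> K) (A i))"
      using A sMK M by (intro prod.cong refl emeasure_bind[symmetric, OF _ K]) (auto simp: prob_space.not_empty)
    finally show "emeasure (PiM I (\<lambda>_. M) \<bind> (\<lambda>\<alpha>. PiM I (\<lambda>i. K (\<alpha> i)))) (\<Pi>\<^sub>E i\<in>I. A i)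
        = (\<Prod>i\<in>I. emeasure (M \<bind> K) (A i))" .
  qed
qed


lemma prod_lessThan_double:
  "(\<Prod>j<2*n. f j) = (\<Prod>i<n. f (2*i) * f (2*i+1::nat)) " for f :: "nat \<Rightarrow> 'a::comm_monoid_mult"
  by (induction n) (simp_all add: mult_ac)

lemma emeasure_pair_Times_prob:
  assumes S: "prob_space S" and A: "A \<in> sets S" "B \<in> sets S"
  shows "emeasure (S \<Otimes>\<^sub>M S) (A \<times> B) = emeasure S A * emeasure S B"
proof -
  interpret SF: sigma_finite_measure S
    by (rule prob_space_imp_sigma_finite[OF S])
  show ?thesis using A by (rule SF.emeasure_pair_measure_Times)
qed

lemma interleave_PiM:
  fixes S B :: "'a measure" and n :: nat
  assumes S: "prob_space S" and SB: "sets S = sets B"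
  shows "distr (PiM {..<n} (\<lambda>_. S \<Otimes>\<^sub>M S)) (PiM {..<2*n} (\<lambda>_. B))
      (\<lambda>p. \<lambda>j\<in>{..<2*n}. if even j then fst (p (j div 2)) else snd (p (j div 2)))
    = PiM {..<2*n} (\<lambda>_. S)" (is "distr ?P ?B ?g = ?R")
proof -
  interpret PS: product_sigma_finite "\<lambda>_. S"
    by (simp add: product_sigma_finite_def S prob_space_imp_sigma_finite)
  interpret SS: pair_sigma_finite S S
    by (simp add: pair_sigma_finite_def S prob_space_imp_sigma_finite)
  interpret PSS: product_sigma_finite "\<lambda>_. S \<Otimes>\<^sub>M S"
    by (simp add: product_sigma_finite_def S prob_space_imp_sigma_finite SS.sigma_finite_measure_axioms)
  have g: "?g \<in> ?P \<rightarrow>\<^sub>M ?B"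
  proof (rule measurable_restrict)
    fix j assume j: "j \<in> {..<2*n}"
    then have "j div 2 \<in> {..<n}" by auto
    then show "(\<lambda>p. if even j then fst (p (j div 2)) else snd (p (j div 2))) \<in> ?P \<rightarrow>\<^sub>M B"
      using SB by (cases "even j") (simp_all add: measurable_cong_sets[OF SB[symmetric] refl])
  qed
  show ?thesis
  proof (rule PS.PiM_eqI)
    show "sets (distr ?P ?B ?g) = sets ?R" using SB by (auto intro!: sets_PiM_cong)
  next
    fix A assume A: "\<And>i. i \<in> {..<2*n} \<Longrightarrow> A i \<in> sets S"
    have sp: "space ?P = (\<Pi>\<^sub>E i\<in>{..<n}. space S \<times> space S)"
      by (simp add: space_PiM space_pair_measure)
    have Asub: "\<And>i. i \<in> {..<2*n} \<Longrightarrow> A i \<subseteq> space S" using A sets.sets_into_space by blast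
    have pre: "?g -` (\<Pi>\<^sub>E j\<in>{..<2*n}. A j) \<inter> space ?P = (\<Pi>\<^sub>E i\<in>{..<n}. A (2*i) \<times> A (2*i+1))"
    proof (intro equalityI subsetI)
      fix p assume p: "p \<in> ?g -` (\<Pi>\<^sub>E j\<in>{..<2*n}. A j) \<inter> space ?P"
      show "p \<in> (\<Pi>\<^sub>E i\<in>{..<n}. A (2*i) \<times> A (2*i+1))"
      proof (rule PiE_I)
        fix i assume i: "i \<in> {..<n}"
        have ga: "\<forall>j\<in>{..<2*n}. ?g p j \<in> A j" using p by (auto simp: PiE_iff)
        have "fst (p i) \<in> A (2*i)" using bspec[OF ga, of "2*i"] i by simp
        moreover have "snd (p i) \<in> A (2*i+1)" using bspec[OF ga, of "2*i+1"] i by simp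
        ultimately show "p i \<in> A (2*i) \<times> A (2*i+1)"
          using i by (auto simp: mem_Times_iff)
      next
        fix i assume "i \<notin> {..<n}"
        then show "p i = undefined" using p by (auto simp: sp PiE_iff extensional_def)
      qed
    next
      fix p assume p: "p \<in> (\<Pi>\<^sub>E i\<in>{..<n}. A (2*i) \<times> A (2*i+1))"
      have "p \<in> space ?P"
      proof -
        have "(\<Pi>\<^sub>E i\<in>{..<n}. A (2*i) \<times> A (2*i+1)) \<subseteq> (\<Pi>\<^sub>E i\<in>{..<n}. space S \<times> space S)"
        proof (rule PiE_mono)
          fix i assume "i \<in> {..<n}"
          then have "2*i \<in> {..<2*n}" "2*i+1 \<in> {..<2*n}" by auto
          then show "A (2*i) \<times> A (2*i+1) \<subseteq> space S \<times> space S" by (intro Sigma_mono Asub)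
        qed
        then show ?thesis using p unfolding sp by blast
      qed
      moreover have "?g p \<in> (\<Pi>\<^sub>E j\<in>{..<2*n}. A j)"
      proof (rule PiE_I)
        fix j assume j: "j \<in> {..<2*n}"
        then have jn: "j div 2 < n" by auto
        show "?g p j \<in> A j"
        proof (cases "even j")
          case True
          then have "j = 2 * (j div 2)" by simp
          moreover have "p (j div 2) \<in> A (2*(j div 2)) \<times> A (2*(j div 2)+1)" using p jn by (auto simp: PiE_iff)
          ultimately have "fst (p (j div 2)) \<in> A j" by (metis mem_Times_iff)
          then show ?thesis using j True by simp
        next
          case False
          then have "j = 2 * (j div 2) + 1" by simp
          moreover have "p (j div 2) \<in> A (2*(j div 2)) \<times> A (2*(j div 2)+1)" using p jn by (auto simp: PiE_iff)
          ultimately have "snd (p (j div 2)) \<in> A j" by (metis mem_Times_iff)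
          then show ?thesis using j False by simp
        qed
      qed simp
      ultimately show "p \<in> ?g -` (\<Pi>\<^sub>E j\<in>{..<2*n}. A j) \<inter> space ?P" by (intro IntI vimageI2)
    qed
    have "emeasure (distr ?P ?B ?g) (\<Pi>\<^sub>E j\<in>{..<2*n}. A j) = emeasure ?P (\<Pi>\<^sub>E i\<in>{..<n}. A (2*i) \<times> A (2*i+1))"
      using A SB by (subst emeasure_distr[OF g]) (auto simp: pre intro!: sets_PiM_I_finite)
    also have "\<dots> = (\<Prod>i<n. emeasure (S \<Otimes>\<^sub>M S) (A (2*i) \<times> A (2*i+1)))"
      using A by (intro PSS.emeasure_PiM) auto
    also have "\<dots> = (\<Prod>i<n. emeasure S (A (2*i)) * emeasure S (A (2*i+1)))"
    proof (rule prod.cong[OF refl])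
      fix i assume i: "i \<in> {..<n}"
      have "A (2*i) \<in> sets S" "A (2*i+1) \<in> sets S" using A[of "2*i"] A[of "2*i+1"] i by simp_all
      then show "emeasure (S \<Otimes>\<^sub>M S) (A (2*i) \<times> A (2*i+1)) = emeasure S (A (2*i)) * emeasure S (A (2*i+1))"
        by (rule emeasure_pair_Times_prob[OF S])
    qed
    also have "\<dots> = (\<Prod>j<2*n. emeasure S (A j))"
      by (rule prod_lessThan_double[symmetric])
    finally show "emeasure (distr ?P ?B ?g) (\<Pi>\<^sub>E j\<in>{..<2*n}. A j) = (\<Prod>j\<in>{..<2*n}. emeasure S (A j))" .
  qed simp
qed



lemma prob_space_gauss: "\<sigma> > 0 \<Longrightarrow> prob_space (gauss \<sigma>)"
  unfolding gauss_def by (rule prob_space_normal_density)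

lemma sets_gauss[simp, measurable_cong]: "sets (gauss \<sigma>) = sets borel"
  unfolding gauss_def by simp

lemma sets_sumlaw[simp, measurable_cong]: "sets (sumlaw \<sigma> n) = sets borel"
  unfolding sumlaw_def by simp

lemma space_sumlaw[simp]: "space (sumlaw \<sigma> n) = UNIV"
  unfolding sumlaw_def by simp

lemma prob_space_sumlaw: "\<sigma> > 0 \<Longrightarrow> prob_space (sumlaw \<sigma> n)"
  unfolding sumlaw_def
  by (intro prob_space.prob_space_distr prob_space_PiM prob_space_gauss) auto

lemma sumlaw_1: "\<sigma> > 0 \<Longrightarrow> sumlaw \<sigma> 1 = gauss \<sigma>"
proof -
  assume s: "\<sigma> > 0"
  have "sumlaw \<sigma> 1 = distr (PiM {..<1::nat} (\<lambda>_. gauss \<sigma>)) (gauss \<sigma>) (\<lambda>x. x 0)"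
    unfolding sumlaw_def by (intro distr_cong) auto
  also have "\<dots> = gauss \<sigma>"
    by (rule distr_PiM_component) (auto simp: prob_space_gauss s)
  finally show ?thesis .
qed

lemma kernel_step:
  assumes s: "\<sigma> > 0" and K: "is_cond_kernel \<sigma> l \<kappa>"
  shows "sumlaw \<sigma> (2^l) \<bind> \<kappa> = sumlaw \<sigma> (2^(l-1)) \<Otimes>\<^sub>M sumlaw \<sigma> (2^(l-1))"
proof -
  let ?S = "sumlaw \<sigma> (2^l)" and ?S' = "sumlaw \<sigma> (2^(l-1))"
  let ?BB = "borel \<Otimes>\<^sub>M borel :: (real \<times> real) measure"
  let ?BBB = "borel \<Otimes>\<^sub>M ?BB :: (real \<times> (real \<times> real)) measure"
  have km: "\<kappa> \<in> borel \<rightarrow>\<^sub>M subprob_algebra ?BB" and eq: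
    "distr (?S' \<Otimes>\<^sub>M ?S') ?BBB (\<lambda>(y1, y2). (y1 + y2, (y1, y2)))
     = ?S \<bind> (\<lambda>a. distr (\<kappa> a) ?BBB (\<lambda>p. (a, p)))"
    using K unfolding is_cond_kernel_def by auto
  have kmS: "\<kappa> \<in> ?S \<rightarrow>\<^sub>M subprob_algebra ?BB"
    using km by (simp add: measurable_cong_sets[OF sets_sumlaw refl])
  have ksets: "sets (\<kappa> a) = sets ?BB" for a
    using sets_kernel[OF km] by simp
  have k2: "(\<lambda>a. distr (\<kappa> a) ?BBB (\<lambda>p. (a, p))) \<in> ?S \<rightarrow>\<^sub>M subprob_algebra ?BBB"
    by (rule measurable_distr2[OF _ kmS]) simp
  have neS: "space ?S \<noteq> {}" by simp
  have "distr (distr (?S' \<Otimes>\<^sub>M ?S') ?BBB (\<lambda>(y1, y2). (y1 + y2, (y1, y2)))) ?BB snd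
      = distr (?S' \<Otimes>\<^sub>M ?S') ?BB (snd \<circ> (\<lambda>(y1, y2). (y1 + y2, (y1, y2))))"
    by (intro distr_distr) auto
  also have "\<dots> = distr (?S' \<Otimes>\<^sub>M ?S') ?BB (\<lambda>x. x)"
    by (intro distr_cong) auto
  also have "\<dots> = ?S' \<Otimes>\<^sub>M ?S'"
    by (intro distr_id2) (auto intro!: sets_pair_measure_cong)
  finally have 1: "distr (distr (?S' \<Otimes>\<^sub>M ?S') ?BBB (\<lambda>(y1, y2). (y1 + y2, (y1, y2)))) ?BB snd
      = ?S' \<Otimes>\<^sub>M ?S'" .
  have "distr (?S \<bind> (\<lambda>a. distr (\<kappa> a) ?BBB (\<lambda>p. (a, p)))) ?BB snd
      = ?S \<bind> (\<lambda>a. distr (distr (\<kappa> a) ?BBB (\<lambda>p. (a, p))) ?BB snd)"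
    by (rule distr_bind[OF k2 neS]) simp
  also have "\<dots> = ?S \<bind> \<kappa>"
  proof (rule bind_cong[OF refl])
    fix a
    have "distr (distr (\<kappa> a) ?BBB (\<lambda>p. (a, p))) ?BB snd = distr (\<kappa> a) ?BB (snd \<circ> (\<lambda>p. (a, p)))"
      by (intro distr_distr) (auto simp: measurable_cong_sets[OF ksets refl])
    also have "\<dots> = distr (\<kappa> a) ?BB (\<lambda>x. x)"
      by (intro distr_cong) auto
    also have "\<dots> = \<kappa> a"
      by (intro distr_id2) (simp add: ksets)
    finally show "distr (distr (\<kappa> a) ?BBB (\<lambda>p. (a, p))) ?BB snd = \<kappa> a" .
  qed
  finally show ?thesis using 1 eq by simp
qed



lemma interleave_measurable:
  fixes X Y :: "'a measure" and n :: nat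
  assumes SB: "sets X = sets Y"
  shows "(\<lambda>p. \<lambda>j\<in>{..<2*n}. if even j then fst (p (j div 2)) else snd (p (j div 2)))
     \<in> PiM {..<n} (\<lambda>_. X \<Otimes>\<^sub>M X) \<rightarrow>\<^sub>M PiM {..<2*n} (\<lambda>_. Y)"
proof (rule measurable_restrict)
  fix j assume j: "j \<in> {..<2*n}"
  then have "j div 2 \<in> {..<n}" by auto
  then show "(\<lambda>p. if even j then fst (p (j div 2)) else snd (p (j div 2))) \<in> PiM {..<n} (\<lambda>_. X \<Otimes>\<^sub>M X) \<rightarrow>\<^sub>M Y"
    using SB by (cases "even j") (simp_all add: measurable_cong_sets[OF SB[symmetric] refl])
qed

lemma layer_base:
  assumes s: "\<sigma> > 0"
  shows "tree_layer \<sigma> \<kappa> h 0 = PiM {..<2^0} (\<lambda>_. sumlaw \<sigma> (2^(h-0)))"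
proof -
  let ?S = "sumlaw \<sigma> (2^h)"
  interpret PS: product_sigma_finite "\<lambda>_. ?S"
    by (simp add: product_sigma_finite_def prob_space_sumlaw[OF s] prob_space_imp_sigma_finite)
  have f: "(\<lambda>a. \<lambda>i\<in>{..<1::nat}. a) \<in> ?S \<rightarrow>\<^sub>M PiM {..<1} (\<lambda>_. borel)"
    by (rule measurable_restrict) simp
  have "distr ?S (PiM {..<1} (\<lambda>_. borel)) (\<lambda>a. \<lambda>i\<in>{..<1::nat}. a) = PiM {..<1} (\<lambda>_. ?S)"
  proof (rule PS.PiM_eqI)
    fix A assume A: "\<And>i. i \<in> {..<1::nat} \<Longrightarrow> A i \<in> sets ?S"
    have pre: "(\<lambda>a. \<lambda>i\<in>{..<1::nat}. a) -` (\<Pi>\<^sub>E i\<in>{..<1}. A i) \<inter> space ?S = A 0"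
    proof (intro equalityI subsetI)
      fix x assume "x \<in> (\<lambda>a. \<lambda>i\<in>{..<1::nat}. a) -` (\<Pi>\<^sub>E i\<in>{..<1}. A i) \<inter> space ?S"
      then have "(\<lambda>i\<in>{..<1::nat}. x) \<in> (\<Pi>\<^sub>E i\<in>{..<1}. A i)" by blast
      from PiE_mem[OF this, of 0] show "x \<in> A 0" by simp
    next
      fix x assume x: "x \<in> A 0"
      have "(\<lambda>i\<in>{..<1::nat}. x) \<in> (\<Pi>\<^sub>E i\<in>{..<1}. A i)"
        by (rule PiE_I) (use x in \<open>simp_all\<close>)
      then show "x \<in> (\<lambda>a. \<lambda>i\<in>{..<1::nat}. a) -` (\<Pi>\<^sub>E i\<in>{..<1}. A i) \<inter> space ?S" by simp
    qed
    show "emeasure (distr ?S (PiM {..<1} (\<lambda>_. borel)) (\<lambda>a. \<lambda>i\<in>{..<1::nat}. a)) (\<Pi>\<^sub>E i\<in>{..<1}. A i)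
        = (\<Prod>i\<in>{..<1}. emeasure ?S (A i))"
    proof -
      have "emeasure (distr ?S (PiM {..<1} (\<lambda>_. borel)) (\<lambda>a. \<lambda>i\<in>{..<1::nat}. a)) (\<Pi>\<^sub>E i\<in>{..<1}. A i)
          = emeasure ?S ((\<lambda>a. \<lambda>i\<in>{..<1::nat}. a) -` (\<Pi>\<^sub>E i\<in>{..<1}. A i) \<inter> space ?S)"
        by (rule emeasure_distr[OF f]) (use A in \<open>auto intro!: sets_PiM_I_finite\<close>)
      also have "\<dots> = emeasure ?S (A 0)" by (simp only: pre)
      also have "\<dots> = (\<Prod>i\<in>{..<1}. emeasure ?S (A i))" by simp
      finally show ?thesis .
    qed
  qed (auto intro!: sets_PiM_cong)
  then show ?thesis by simp
qed

lemma layers: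
  assumes s: "\<sigma> > 0" and K: "\<forall>l\<in>{1..h}. is_cond_kernel \<sigma> l (\<kappa> l)"
  shows "d \<le> h \<Longrightarrow> tree_layer \<sigma> \<kappa> h d = PiM {..<(2::nat)^d} (\<lambda>_. sumlaw \<sigma> (2^(h-d)))"
proof (induction d)
  case 0
  show ?case by (rule layer_base[OF s])
next
  case (Suc d)
  define l where "l = h - d"
  have l1: "l \<in> {1..h}" using Suc.prems by (auto simp: l_def)
  have hd: "h - Suc d = l - 1" by (simp add: l_def)
  let ?S = "sumlaw \<sigma> (2^l)" and ?S' = "sumlaw \<sigma> (2^(l-1))"
  let ?BB = "borel \<Otimes>\<^sub>M borel :: (real \<times> real) measure"
  let ?T = "PiM {..<(2::nat)^d} (\<lambda>_. ?S)"
  let ?R = "PiM {..<2*2^d} (\<lambda>_. borel :: real measure)"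
  let ?g = "\<lambda>p. \<lambda>j\<in>{..<2*2^d}. if even j then fst (p (j div 2)) else snd (p (j div 2 :: nat))"
  have Kl: "is_cond_kernel \<sigma> l (\<kappa> l)" using K l1 by auto
  have km: "\<kappa> l \<in> borel \<rightarrow>\<^sub>M subprob_algebra ?BB" and kp: "\<And>a. prob_space (\<kappa> l a)"
    using Kl unfolding is_cond_kernel_def by auto
  have kmS: "\<kappa> l \<in> ?S \<rightarrow>\<^sub>M subprob_algebra ?BB"
    using km by (simp add: measurable_cong_sets[OF sets_sumlaw refl])
  have F: "(\<lambda>\<alpha>. PiM {..<(2::nat)^d} (\<lambda>i. \<kappa> l (\<alpha> i))) \<in> ?T \<rightarrow>\<^sub>M subprob_algebra (PiM {..<(2::nat)^d} (\<lambda>_. ?BB))"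
    by (rule measurable_PiM_kernel[OF _ kmS kp]) simp
  have neT: "space ?T \<noteq> {}"
    using prob_space.not_empty[OF prob_space_PiM[OF prob_space_sumlaw[OF s]]] .
  have g: "?g \<in> PiM {..<(2::nat)^d} (\<lambda>_. ?BB) \<rightarrow>\<^sub>M ?R"
    by (rule interleave_measurable) simp
  have Sp: "prob_space ?S'" by (rule prob_space_sumlaw[OF s])
  have "tree_layer \<sigma> \<kappa> h (Suc d) = ?T \<bind> (\<lambda>\<alpha>. distr (PiM {..<(2::nat)^d} (\<lambda>i. \<kappa> l (\<alpha> i))) ?R ?g)"
    using Suc by (simp add: l_def)
  also have "\<dots> = distr (?T \<bind> (\<lambda>\<alpha>. PiM {..<(2::nat)^d} (\<lambda>i. \<kappa> l (\<alpha> i)))) ?R ?g"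
    by (rule distr_bind[OF F neT g, symmetric])
  also have "?T \<bind> (\<lambda>\<alpha>. PiM {..<(2::nat)^d} (\<lambda>i. \<kappa> l (\<alpha> i))) = PiM {..<(2::nat)^d} (\<lambda>_. ?S \<bind> \<kappa> l)"
    by (rule bind_PiM_kernel[OF _ prob_space_sumlaw[OF s] kmS kp]) simp
  also have "?S \<bind> \<kappa> l = ?S' \<Otimes>\<^sub>M ?S'"
    by (rule kernel_step[OF s Kl])
  also have "distr (PiM {..<(2::nat)^d} (\<lambda>_. ?S' \<Otimes>\<^sub>M ?S')) ?R ?g = PiM {..<2*2^d} (\<lambda>_. ?S')"
    by (rule interleave_PiM[OF Sp]) simp
  finally show ?case by (simp add: hd)
qed



theorem lemmaF4:
  fixes \<sigma> :: real and N :: nat and \<kappa> :: "nat \<Rightarrow> real \<Rightarrow> (real \<times> real) measure"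
  assumes "\<sigma> > 0"
    and "\<forall>l\<in>{1..tree_height N}. is_cond_kernel \<sigma> l (\<kappa> l)"
  shows "distr (tree_layer \<sigma> \<kappa> (tree_height N) (tree_height N)) (PiM {..N} (\<lambda>_. borel))
           (\<lambda>\<alpha>. \<lambda>x\<in>{..N}. \<Sum>i<x. \<alpha> i)
       = distr (PiM {..<N} (\<lambda>_. gauss \<sigma>)) (PiM {..N} (\<lambda>_. borel))
           (\<lambda>\<omega>. \<lambda>x\<in>{..N}. \<Sum>i<N. \<omega> i * (if i < x then 1 else 0))"
proof -
  note s = assms(1)
  define h where "h = tree_height N"
  have Nh: "N \<le> 2^h" unfolding h_def tree_height_def
    by (rule LeastI[where k=N]) (simp add: less_imp_le)
  let ?G = "\<lambda>_::nat. gauss \<sigma>"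
  let ?F2 = "\<lambda>\<omega>. \<lambda>x\<in>{..N}. \<Sum>i<N. \<omega> i * (if i < x then 1 else (0::real))"
  have L: "tree_layer \<sigma> \<kappa> h h = PiM {..<2^h} ?G"
    using layers[OF s assms(2)[folded h_def], of h] sumlaw_1[OF s] by simp
  interpret PP: product_prob_space ?G "{}"
    by (simp add: product_prob_space_def product_sigma_finite_def product_prob_space_axioms_def
        prob_space_gauss[OF s] prob_space_imp_sigma_finite)
  have R: "PiM {..<N} ?G = distr (PiM {..<2^h} ?G) (PiM {..<N} ?G) (\<lambda>f. restrict f {..<N})"
    by (rule PP.distr_restrict) (use Nh in auto)
  have F2: "?F2 \<in> PiM {..<N} ?G \<rightarrow>\<^sub>M PiM {..N} (\<lambda>_. borel)"
    by measurable
  have r: "(\<lambda>f. restrict f {..<N}) \<in> PiM {..<2^h} ?G \<rightarrow>\<^sub>M PiM {..<N} ?G"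
    by (rule measurable_restrict_subset) (use Nh in auto)
  have "distr (PiM {..<N} ?G) (PiM {..N} (\<lambda>_. borel)) ?F2
      = distr (PiM {..<2^h} ?G) (PiM {..N} (\<lambda>_. borel)) (?F2 \<circ> (\<lambda>f. restrict f {..<N}))"
    by (subst R) (rule distr_distr[OF F2 r])
  also have "\<dots> = distr (PiM {..<2^h} ?G) (PiM {..N} (\<lambda>_. borel)) (\<lambda>\<alpha>. \<lambda>x\<in>{..N}. \<Sum>i<x. \<alpha> i)"
  proof (rule distr_cong[OF refl refl])
    fix \<alpha> :: "nat \<Rightarrow> real"
    show "(?F2 \<circ> (\<lambda>f. restrict f {..<N})) \<alpha> = (\<lambda>x\<in>{..N}. \<Sum>i<x. \<alpha> i)"
    proof (rule ext)
      fix x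
      show "(?F2 \<circ> (\<lambda>f. restrict f {..<N})) \<alpha> x = (\<lambda>x\<in>{..N}. \<Sum>i<x. \<alpha> i) x"
      proof (cases "x \<le> N")
        case True
        have "(\<Sum>i<N. restrict \<alpha> {..<N} i * (if i < x then 1 else 0)) = (\<Sum>i<N. if i < x then \<alpha> i else 0)"
          by (intro sum.cong) auto
        also have "\<dots> = (\<Sum>i\<in>{i\<in>{..<N}. i < x}. \<alpha> i)"
          by (rule sum.inter_filter[symmetric]) simp
        also have "{i\<in>{..<N}. i < x} = {..<x}" using True by auto
        finally show ?thesis using True by simp
      qed simp
    qed
  qed
  finally show ?thesis using L by (simp add: h_def)
qed


end
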